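(* For every $m\in\{1,\dots,L\}$, $\lambda_m^C(\mathcal{S})$ equals the maximum total workload of $\mathcal{S}$ that can be processed in the time-slot interval $[\tau_{L-m}+1,d]$ on $C$ machines, i.e. the maximum of $\sum_{T_j\in\mathcal{S}}\sum_{t=\tau_{L-m}+1}^{d_j}y_j(t)$ over all allocations $y_j:\{1,\dots,d_j\}\to\{0,\dots,k_j\}$ ($T_j\in\mathcal{S}$) with $\sum_{t\le d_j}y_j(t)\le D_j$ for each $T_j$ and $\sum_{T_j\in\mathcal{S}}y_j(t)\le C$ for each slot $t$.
   Context: There are $C$ identical machines and a finite set $\mathcal{T}$ of tasks; $\mathcal{S}\subseteq\mathcal{T}$. Task $T_j$ has workload $D_j\in\mathbb{Z}^+$, deadline $d_j\in\mathbb{Z}^+$ and parallelism bound $k_j\in\mathbb{Z}^+$; it can only be processed in slots $1,\dots,d_j$ and on at most $k_j$ machines per slot. Time slots are $1,\dots,d$ with $d=\max_j d_j$. Let $len_j=\lceil D_j/k_j\rceil$, and let $0=\tau_0<\tau_1<\dots<\tau_L=d$ where $\{\tau_1,\dots,\tau_L\}$ is the set of distinct deadlines of tasks in $\mathcal{T}$. For $m\in\{0,\dots,L\}$ define $\lambda_m(\mathcal{S})=\sum_{T_j\in\mathcal{S},\,d_j>\tau_{L-m}} c_j^{(m)}$, where $c_j^{(m)}=D_j$ if $len_j\le d_j-\tau_{L-m}$ and $c_j^{(m)}=k_j(d_j-\tau_{L-m})$ otherwise. Define $\lambda_0^C(\mathcal{S})=0$ and for $m=1,\dots,L$: $\lambda_m^C(\mathcal{S})=\lambda_{m-1}^C(\mathcal{S})+\min\{\lambda_m(\mathcal{S})-\lambda_{m-1}^C(\mathcal{S}),\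 C(\tau_{L-m+1}-\tau_{L-m})\}$. *)

theory Defs
  imports Complex_Main
begin

text \<open>Tasks are elements of a type 'a; the task set is a finite set T.
  D j = workload, dl j = deadline, k j = parallelism bound.\<close>

definition nL :: "'a set \<Rightarrow> ('a \<Rightarrow> nat) \<Rightarrow> nat" where
  "nL T dl = card (dl ` T)"

definition tau :: "'a set \<Rightarrow> ('a \<Rightarrow> nat) \<Rightarrow> nat \<Rightarrow> nat" where
  "tau T dl i = (0 # sorted_list_of_set (dl ` T)) ! i"

definition len :: "nat \<Rightarrow> nat \<Rightarrow> nat" where
  "len Dj kj = nat \<lceil>real Dj / real kj\<rceil>"

definition lam :: "'a set \<Rightarrow> 'a set \<Rightarrow> ('a \<Rightarrow> nat) \<Rightarrow> ('a \<Rightarrow> nat) \<Rightarrow> ('a \<Rightarrow> nat) \<Rightarrow> nat \<Rightarrow> int" where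
  "lam T S D dl k m =
     (let t0 = tau T dl (nL T dl - m) in
      (\<Sum>j\<in>{j\<in>S. dl j > t0}.
         (if len (D j) (k j) \<le> dl j - t0 then int (D j) else int (k j * (dl j - t0)))))"

fun lamC :: "nat \<Rightarrow> 'a set \<Rightarrow> 'a set \<Rightarrow> ('a \<Rightarrow> nat) \<Rightarrow> ('a \<Rightarrow> nat) \<Rightarrow> ('a \<Rightarrow> nat) \<Rightarrow> nat \<Rightarrow> int" where
  "lamC C T S D dl k 0 = 0"
| "lamC C T S D dl k (Suc m) =
     lamC C T S D dl k m
     + min (lam T S D dl k (Suc m) - lamC C T S D dl k m)
           (int C * (int (tau T dl (nL T dl - m)) - int (tau T dl (nL T dl - Suc m))))"

text \<open>Feasible allocations of the tasks in S: y j t is the number of machines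
  given to task j in slot t (only slots 1..dl j are meaningful).\<close>
definition feasible_alloc :: "nat \<Rightarrow> 'a set \<Rightarrow> ('a \<Rightarrow> nat) \<Rightarrow> ('a \<Rightarrow> nat) \<Rightarrow> ('a \<Rightarrow> nat)
    \<Rightarrow> ('a \<Rightarrow> nat \<Rightarrow> nat) \<Rightarrow> bool" where
  "feasible_alloc C S D dl k y \<longleftrightarrow>
     (\<forall>j\<in>S. \<forall>t\<in>{1..dl j}. y j t \<le> k j) \<and>
     (\<forall>j\<in>S. (\<Sum>t\<in>{1..dl j}. y j t) \<le> D j) \<and>
     (\<forall>t. (\<Sum>j\<in>{j\<in>S. t \<le> dl j}. y j t) \<le> C)"

definition processed_after :: "'a set \<Rightarrow> ('a \<Rightarrow> nat) \<Rightarrow> nat \<Rightarrow> ('a \<Rightarrow> nat \<Rightarrow> nat) \<Rightarrow> int" where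
  "processed_after S dl s y = int (\<Sum>j\<in>S. \<Sum>t\<in>{s+1..dl j}. y j t)"

definition max_processed_after :: "nat \<Rightarrow> 'a set \<Rightarrow> ('a \<Rightarrow> nat) \<Rightarrow> ('a \<Rightarrow> nat) \<Rightarrow> ('a \<Rightarrow> nat)
    \<Rightarrow> nat \<Rightarrow> int" where
  "max_processed_after C S D dl k s =
     Max {processed_after S dl s y | y. feasible_alloc C S D dl k y}"

end

theory Submission
  imports Defs
begin


lemma tau_mono:
  assumes "finite T" "i \<le> i'" "i' \<le> nL T dl"
  shows "tau T dl i \<le> tau T dl i'"
proof -
  let ?Ds = "sorted_list_of_set (dl ` T)"
  have len: "length ?Ds = nL T dl" using assms(1) by (simp add: nL_def)
  have "sorted (0 # ?Ds)" by simp
  then show ?thesis unfolding tau_def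
    by (rule sorted_nth_mono) (use assms len in auto)
qed

lemma tau0: "tau T dl 0 = 0" by (simp add: tau_def)

lemma tau_dl:
  assumes "finite T" "j \<in> T"
  shows "\<exists>q. 1 \<le> q \<and> q \<le> nL T dl \<and> dl j = tau T dl q"
proof -
  let ?Ds = "sorted_list_of_set (dl ` T)"
  have len: "length ?Ds = nL T dl" using assms(1) by (simp add: nL_def)
  have "dl j \<in> set ?Ds" using assms by simp
  then obtain q' where "q' < length ?Ds" "?Ds ! q' = dl j" by (metis in_set_conv_nth)
  then show ?thesis using len by (intro exI[of _ "Suc q'"]) (auto simp: tau_def)
qed

lemma dl_le_tauL:
  assumes "finite T" "j \<in> T"
  shows "dl j \<le> tau T dl (nL T dl)"
proof -
  obtain q where q: "1 \<le> q" "q \<le> nL T dl" "dl j = tau T dl q" using tau_dl[OF assms] by blast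
  show ?thesis using tau_mono[OF assms(1) q(2) order_refl] q(3) by simp
qed

lemma dl_between:
  assumes "finite T" "j \<in> T" "i < nL T dl"
  shows "dl j \<le> tau T dl i \<or> tau T dl (Suc i) \<le> dl j"
proof -
  obtain q where q: "1 \<le> q" "q \<le> nL T dl" "dl j = tau T dl q" using tau_dl[OF assms(1,2)] by blast
  show ?thesis
  proof (cases "q \<le> i")
    case True then show ?thesis using tau_mono[OF assms(1), of q i] q assms(3) by auto
  next
    case False then show ?thesis using tau_mono[OF assms(1), of "Suc i" q] q by auto
  qed
qed

lemma len_le_iff:
  assumes "kj > 0"
  shows "len Dj kj \<le> x \<longleftrightarrow> Dj \<le> kj * x"
proof -
  have "len Dj kj \<le> x \<longleftrightarrow> \<lceil>real Dj / real kj\<rceil> \<le> int x" unfolding len_def by linarith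
  also have "\<dots> \<longleftrightarrow> real Dj / real kj \<le> real x" by (simp add: ceiling_le_iff)
  also have "\<dots> \<longleftrightarrow> real Dj \<le> real kj * real x" using assms by (simp add: divide_le_eq mult.commute)
  also have "\<dots> \<longleftrightarrow> Dj \<le> kj * x" by (metis of_nat_le_iff of_nat_mult)
  finally show ?thesis .
qed

definition AA :: "'a set \<Rightarrow> ('a \<Rightarrow> nat) \<Rightarrow> ('a \<Rightarrow> nat) \<Rightarrow> ('a \<Rightarrow> nat) \<Rightarrow> nat \<Rightarrow> nat" where
  "AA S D dl k p = (\<Sum>j\<in>S. min (D j) (k j * (dl j - p)))"

lemma lam_AA:
  assumes "finite S" "\<forall>j\<in>S. k j > 0"
  shows "lam T S D dl k m = int (AA S D dl k (tau T dl (nL T dl - m)))"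
proof -
  define t0 where "t0 = tau T dl (nL T dl - m)"
  have "lam T S D dl k m = (\<Sum>j\<in>{j\<in>S. dl j > t0}. int (min (D j) (k j * (dl j - t0))))"
    unfolding lam_def Let_def t0_def[symmetric]
    by (rule sum.cong) (use assms len_le_iff in auto)
  also have "\<dots> = (\<Sum>j\<in>S. int (min (D j) (k j * (dl j - t0))))"
    by (rule sum.mono_neutral_left) (use assms in auto)
  finally show ?thesis unfolding AA_def t0_def by (simp only: of_nat_sum)
qed



lemma task_le_D:
  assumes "feasible_alloc C S D dl k y" "j \<in> S"
  shows "(\<Sum>t\<in>{s+1..dl j}. y j t) \<le> D j"
proof -
  have "(\<Sum>t\<in>{s+1..dl j}. y j t) \<le> (\<Sum>t\<in>{1..dl j}. y j t)"
    by (rule sum_mono2) auto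
  also have "\<dots> \<le> D j" using assms unfolding feasible_alloc_def by blast
  finally show ?thesis .
qed

lemma task_le_k:
  assumes "feasible_alloc C S D dl k y" "j \<in> S"
  shows "(\<Sum>t\<in>{s+1..dl j}. y j t) \<le> k j * (dl j - s)"
proof -
  have "(\<Sum>t\<in>{s+1..dl j}. y j t) \<le> (\<Sum>t\<in>{s+1..dl j}. k j)"
    by (rule sum_mono) (use assms in \<open>auto simp: feasible_alloc_def\<close>)
  also have "\<dots> = k j * (dl j - s)" by simp
  finally show ?thesis .
qed

lemma U1:
  assumes "feasible_alloc C S D dl k y"
  shows "processed_after S dl s y \<le> int (AA S D dl k s)"
  unfolding processed_after_def AA_def of_nat_le_iff
  by (rule sum_mono) (use task_le_D[OF assms] task_le_k[OF assms] in auto)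

lemma U2:
  assumes "feasible_alloc C S D dl k y" "finite S" "s \<le> s'"
  shows "processed_after S dl s y \<le> int (C * (s' - s)) + processed_after S dl s' y"
proof -
  have split: "(\<Sum>t\<in>{s+1..dl j}. y j t) = (\<Sum>t\<in>{t\<in>{s+1..s'}. t \<le> dl j}. y j t) + (\<Sum>t\<in>{s'+1..dl j}. y j t)" for j
  proof -
    have "{s+1..dl j} = {t\<in>{s+1..s'}. t \<le> dl j} \<union> {s'+1..dl j}" using assms(3) by auto
    then show ?thesis by (simp add: sum.union_disjoint[symmetric]) (subst sum.union_disjoint; auto)
  qed
  have "(\<Sum>j\<in>S. \<Sum>t\<in>{t\<in>{s+1..s'}. t \<le> dl j}. y j t) = (\<Sum>t\<in>{s+1..s'}. \<Sum>j\<in>{j\<in>S. t \<le> dl j}. y j t)"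
    by (rule sum.swap_restrict) (use assms in auto)
  also have "\<dots> \<le> (\<Sum>t\<in>{s+1..s'}. C)"
    by (rule sum_mono) (use assms(1) in \<open>auto simp: feasible_alloc_def\<close>)
  also have "\<dots> = C * (s' - s)" by simp
  finally have "(\<Sum>j\<in>S. \<Sum>t\<in>{t\<in>{s+1..s'}. t \<le> dl j}. y j t) \<le> C * (s' - s)" .
  then show ?thesis unfolding processed_after_def split sum.distrib of_nat_add[symmetric] of_nat_le_iff by simp
qed

lemma min_shift: "(x::int) + min (y - x) z = min y (x + z)" by linarith

lemma lamC_Suc_min:
  assumes "finite T" "Suc m \<le> nL T dl"
  shows "lamC C T S D dl k (Suc m) = min (lam T S D dl k (Suc m))
      (lamC C T S D dl k m + int (C * (tau T dl (nL T dl - m) - tau T dl (nL T dl - Suc m))))"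
proof -
  have le: "tau T dl (nL T dl - Suc m) \<le> tau T dl (nL T dl - m)"
    by (rule tau_mono) (use assms in auto)
  then have "int C * (int (tau T dl (nL T dl - m)) - int (tau T dl (nL T dl - Suc m)))
     = int (C * (tau T dl (nL T dl - m) - tau T dl (nL T dl - Suc m)))"
    by (simp add: of_nat_diff)
  then have "lamC C T S D dl k (Suc m) = lamC C T S D dl k m + min (lam T S D dl k (Suc m) - lamC C T S D dl k m)
      (int (C * (tau T dl (nL T dl - m) - tau T dl (nL T dl - Suc m))))"
    by (simp only: lamC.simps)
  also have "\<dots> = min (lam T S D dl k (Suc m))
      (lamC C T S D dl k m + int (C * (tau T dl (nL T dl - m) - tau T dl (nL T dl - Suc m))))"
    using min_shift by blast
  finally show ?thesis .
qed

lemma upper: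
  assumes "finite T" "S \<subseteq> T" "\<forall>j\<in>T. k j > 0" "feasible_alloc C S D dl k y"
  shows "m \<le> nL T dl \<Longrightarrow> processed_after S dl (tau T dl (nL T dl - m)) y \<le> lamC C T S D dl k m"
proof (induction m)
  case 0
  have "processed_after S dl (tau T dl (nL T dl)) y = 0"
    unfolding processed_after_def
  proof (rule iffD2[OF of_nat_eq_0_iff], rule sum.neutral, rule ballI)
    fix j assume "j \<in> S"
    then have "dl j \<le> tau T dl (nL T dl)" using dl_le_tauL[OF assms(1)] assms(2) by blast
    then have "{tau T dl (nL T dl) + 1..dl j} = {}" by auto
    then show "(\<Sum>t\<in>{tau T dl (nL T dl) + 1..dl j}. y j t) = 0" by simp
  qed
  then show ?case by simp
next
  case (Suc m)
  have fS: "finite S" using assms finite_subset by blast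
  have kS: "\<forall>j\<in>S. k j > 0" using assms by blast
  let ?a = "tau T dl (nL T dl - Suc m)" and ?b = "tau T dl (nL T dl - m)"
  have le: "?a \<le> ?b" by (rule tau_mono) (use assms Suc in auto)
  have "processed_after S dl ?a y \<le> lam T S D dl k (Suc m)"
    using U1[OF assms(4)] lam_AA[OF fS kS] by simp
  moreover have "processed_after S dl ?a y \<le> lamC C T S D dl k m + int (C * (?b - ?a))"
    using U2[OF assms(4) fS le] Suc by simp
  ultimately show ?case using lamC_Suc_min[OF assms(1) Suc.prems] by simp
qed



lemma ident:
  fixes a b p dl kk :: nat
  assumes "a \<le> p" "p \<le> b" "b \<le> dl"
  shows "(b - a) * (kk * (dl - p)) = (b - p) * (kk * (dl - a)) + (p - a) * (kk * (dl - b))"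
proof -
  have "int ((b - a) * (kk * (dl - p))) = (int b - int a) * (int kk * (int dl - int p))"
    using assms by (simp add: of_nat_diff)
  also have "\<dots> = (int b - int p) * (int kk * (int dl - int a)) + (int p - int a) * (int kk * (int dl - int b))"
    by (simp add: algebra_simps)
  also have "\<dots> = int ((b - p) * (kk * (dl - a)) + (p - a) * (kk * (dl - b)))"
    using assms by (simp add: of_nat_diff)
  finally show ?thesis by (simp only: of_nat_eq_iff)
qed

lemma term_concave:
  fixes a b p dl kk DD :: nat
  assumes "a \<le> p" "p \<le> b" "dl \<le> a \<or> b \<le> dl"
  shows "(b - p) * min DD (kk * (dl - a)) + (p - a) * min DD (kk * (dl - b)) \<le> (b - a) * min DD (kk * (dl - p))"
proof (cases "dl \<le> a")
  case True
  then show ?thesis using assms by simp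
next
  case False
  then have bd: "b \<le> dl" using assms by auto
  show ?thesis
  proof (cases "DD \<le> kk * (dl - p)")
    case True
    have "(b - p) * min DD (kk * (dl - a)) + (p - a) * min DD (kk * (dl - b)) \<le> (b - p) * DD + (p - a) * DD"
      by (intro add_mono mult_le_mono2) auto
    also have "\<dots> = (b - a) * DD" using assms by (simp add: add_mult_distrib[symmetric])
    finally show ?thesis using True by simp
  next
    case False
    have "(b - p) * min DD (kk * (dl - a)) + (p - a) * min DD (kk * (dl - b)) \<le> (b - p) * (kk * (dl - a)) + (p - a) * (kk * (dl - b))"
      by (intro add_mono mult_le_mono2) auto
    also have "\<dots> = (b - a) * (kk * (dl - p))" using ident[OF assms(1,2) bd] by simp
    finally show ?thesis using False by simp
  qed
qed

lemma concave:
  assumes "finite S" "a \<le> p" "p \<le> b" "\<forall>j\<in>S. dl j \<le> a \<or> b \<le> dl j"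
  shows "min (AA S D dl k a) (C * (b - a) + AA S D dl k b) \<le> C * (p - a) + AA S D dl k p"
proof (cases "a = b")
  case True
  then show ?thesis using assms by simp
next
  case False
  then have ab: "a < b" using assms by simp
  define M where "M = min (AA S D dl k a) (C * (b - a) + AA S D dl k b)"
  have sumc: "(b - p) * AA S D dl k a + (p - a) * AA S D dl k b \<le> (b - a) * AA S D dl k p"
    unfolding AA_def sum_distrib_left sum.distrib[symmetric]
    by (rule sum_mono) (use assms term_concave in auto)
  have "(b - a) * M = (b - p) * M + (p - a) * M" using assms by (simp add: add_mult_distrib[symmetric])
  also have "\<dots> \<le> (b - p) * AA S D dl k a + (p - a) * (C * (b - a) + AA S D dl k b)"
    unfolding M_def by (intro add_mono mult_le_mono2) auto
  also have "\<dots> = (b - p) * AA S D dl k a + (p - a) * AA S D dl k b + (b - a) * (C * (p - a))"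
    by (simp add: add_mult_distrib2 mult.commute mult.left_commute)
  also have "\<dots> \<le> (b - a) * AA S D dl k p + (b - a) * (C * (p - a))"
    using sumc by simp
  also have "\<dots> = (b - a) * (C * (p - a) + AA S D dl k p)" by (simp add: algebra_simps)
  finally have "(b - a) * M \<le> (b - a) * (C * (p - a) + AA S D dl k p)" .
  then show ?thesis unfolding M_def using ab by simp
qed

lemma bridge:
  assumes "finite T" "S \<subseteq> T" "\<forall>j\<in>T. k j > 0"
  shows "m \<le> nL T dl \<Longrightarrow> \<forall>p\<in>{tau T dl (nL T dl - m)..tau T dl (nL T dl)}.
     lamC C T S D dl k m \<le> int (C * (p - tau T dl (nL T dl - m)) + AA S D dl k p)"
proof (induction m)
  case 0
  then show ?case by simp
next
  case (Suc m)
  have fS: "finite S" using assms finite_subset by blast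
  have kS: "\<forall>j\<in>S. k j > 0" using assms by blast
  let ?a = "tau T dl (nL T dl - Suc m)" and ?b = "tau T dl (nL T dl - m)" and ?d = "tau T dl (nL T dl)"
  have ab: "?a \<le> ?b" by (rule tau_mono) (use assms Suc in auto)
  have bd: "?b \<le> ?d" by (rule tau_mono) (use assms Suc in auto)
  have IH: "\<forall>p\<in>{?b..?d}. lamC C T S D dl k m \<le> int (C * (p - ?b) + AA S D dl k p)"
    using Suc by simp
  have "lamC C T S D dl k m \<le> int (C * (?b - ?b) + AA S D dl k ?b)"
    using IH bd by (meson atLeastAtMost_iff order_refl)
  then have IHb: "lamC C T S D dl k m \<le> int (AA S D dl k ?b)" by simp
  have lamS: "lam T S D dl k (Suc m) = int (AA S D dl k ?a)" using lam_AA[OF fS kS] by simp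
  have LS: "lamC C T S D dl k (Suc m) = min (int (AA S D dl k ?a)) (lamC C T S D dl k m + int (C * (?b - ?a)))"
    by (rule trans[OF lamC_Suc_min[OF assms(1) Suc.prems]]) (simp only: lamS)
  show ?case
  proof
    fix p assume p: "p \<in> {?a..?d}"
    show "lamC C T S D dl k (Suc m) \<le> int (C * (p - ?a) + AA S D dl k p)"
    proof (cases "?b \<le> p")
      case True
      then have "lamC C T S D dl k m \<le> int (C * (p - ?b) + AA S D dl k p)" using IH p by auto
      moreover have "C * (p - ?a) = C * (p - ?b) + C * (?b - ?a)" using True ab
        by (simp add: diff_mult_distrib2)
      then have h2: "int (C * (p - ?a) + AA S D dl k p) = int (C * (p - ?b) + AA S D dl k p) + int (C * (?b - ?a))"
        by simp
      have h3: "lamC C T S D dl k (Suc m) \<le> lamC C T S D dl k m + int (C * (?b - ?a))"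
        unfolding LS by (rule min.cobounded2)
      show ?thesis using h2 h3 \<open>lamC C T S D dl k m \<le> int (C * (p - ?b) + AA S D dl k p)\<close> by linarith
    next
      case False
      have btw: "\<forall>j\<in>S. dl j \<le> ?a \<or> ?b \<le> dl j"
      proof
        fix j assume "j \<in> S"
        then have "j \<in> T" using assms by blast
        moreover have "nL T dl - Suc m < nL T dl" using Suc.prems by simp
        moreover have "Suc (nL T dl - Suc m) = nL T dl - m" using Suc.prems by simp
        ultimately show "dl j \<le> ?a \<or> ?b \<le> dl j" using dl_between[OF assms(1)] by metis
      qed
      have "min (AA S D dl k ?a) (C * (?b - ?a) + AA S D dl k ?b) \<le> C * (p - ?a) + AA S D dl k p"
        by (rule concave[OF fS _ _ btw]) (use p False in auto)
      then show ?thesis using LS IHb by linarith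
    qed
  qed
qed



definition cutv :: "nat \<Rightarrow> 'a set \<Rightarrow> ('a \<Rightarrow> nat) \<Rightarrow> ('a \<Rightarrow> nat) \<Rightarrow> ('a \<Rightarrow> nat) \<Rightarrow> nat \<Rightarrow> nat \<Rightarrow> nat" where
  "cutv C S dl k r s p = C * (p - s) + (\<Sum>j\<in>S. min (r j) (k j * (dl j - p)))"

definition Phi :: "nat \<Rightarrow> 'a set \<Rightarrow> ('a \<Rightarrow> nat) \<Rightarrow> ('a \<Rightarrow> nat) \<Rightarrow> ('a \<Rightarrow> nat) \<Rightarrow> nat \<Rightarrow> nat \<Rightarrow> nat" where
  "Phi C S dl k r s d = Min (cutv C S dl k r s ` {s..d})"

definition gt :: "nat \<Rightarrow> 'a set \<Rightarrow> ('a \<Rightarrow> nat) \<Rightarrow> ('a \<Rightarrow> nat) \<Rightarrow> ('a \<Rightarrow> nat) \<Rightarrow> nat \<Rightarrow> ('a \<Rightarrow> nat) \<Rightarrow> nat \<Rightarrow> nat" where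
  "gt C S dl k r s x p = C * (p - Suc s) + (\<Sum>j\<in>S. min (r j) (k j * (dl j - p) + x j))"

definition gg :: "nat \<Rightarrow> 'a set \<Rightarrow> ('a \<Rightarrow> nat) \<Rightarrow> ('a \<Rightarrow> nat) \<Rightarrow> ('a \<Rightarrow> nat) \<Rightarrow> nat \<Rightarrow> nat \<Rightarrow> ('a \<Rightarrow> nat) \<Rightarrow> nat" where
  "gg C S dl k r s d x = Min (gt C S dl k r s x ` {Suc s..d})"

lemma gg_le: "s < d \<Longrightarrow> p \<in> {Suc s..d} \<Longrightarrow> gg C S dl k r s d x \<le> gt C S dl k r s x p"
  unfolding gg_def by (rule Min_le) auto

lemma gg_in: "s < d \<Longrightarrow> \<exists>p\<in>{Suc s..d}. gg C S dl k r s d x = gt C S dl k r s x p"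
proof -
  assume "s < d"
  then have "gg C S dl k r s d x \<in> gt C S dl k r s x ` {Suc s..d}"
    unfolding gg_def by (intro Min_in) auto
  then show ?thesis by auto
qed

lemma gg_ge: "s < d \<Longrightarrow> (\<And>p. p \<in> {Suc s..d} \<Longrightarrow> v \<le> gt C S dl k r s x p) \<Longrightarrow> v \<le> gg C S dl k r s d x"
  unfolding gg_def by (subst Min_ge_iff) auto

lemma gt_inc:
  assumes "finite S" "j \<in> S"
  shows "gt C S dl k r s (\<lambda>i. if i = j then Suc (x i) else x i) p =
         gt C S dl k r s x p + (if k j * (dl j - p) + x j < r j then 1 else 0)"
proof -
  have "min (r i) (k i * (dl i - p) + (if i = j then Suc (x i) else x i)) =
        min (r i) (k i * (dl i - p) + x i) + (if i = j then (if k j * (dl j - p) + x j < r j then 1 else 0) else 0)" for i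
    by auto
  then have "(\<Sum>i\<in>S. min (r i) (k i * (dl i - p) + (if i = j then Suc (x i) else x i))) =
     (\<Sum>i\<in>S. min (r i) (k i * (dl i - p) + x i)) + (\<Sum>i\<in>S. (if i = j then (if k j * (dl j - p) + x j < r j then 1 else 0) else 0))"
    by (simp add: sum.distrib)
  also have "(\<Sum>i\<in>S. (if i = j then (if k j * (dl j - p) + x j < r j then 1 else 0) else 0)) = (if k j * (dl j - p) + x j < r j then 1 else 0)"
    using assms by (simp add: sum.delta)
  finally show ?thesis unfolding gt_def by simp
qed

lemma gg_step:
  assumes "finite S" "s < d" "\<forall>j\<in>S. x j \<le> u j"
    and lt: "gg C S dl k r s d x < gg C S dl k r s d u"
  shows "\<exists>j\<in>S. x j < u j \<and> gg C S dl k r s d (\<lambda>i. if i = j then Suc (x i) else x i) = Suc (gg C S dl k r s d x)"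
proof -
  let ?P = "{Suc s..d}"
  let ?G = "gg C S dl k r s d x"
  define p0 where "p0 = (LEAST p. p \<in> ?P \<and> gt C S dl k r s x p = ?G)"
  have ex: "\<exists>p. p \<in> ?P \<and> gt C S dl k r s x p = ?G" using gg_in[OF assms(2)] by metis
  have p0: "p0 \<in> ?P" "gt C S dl k r s x p0 = ?G"
    using LeastI_ex[OF ex] unfolding p0_def by auto
  have below: "?G < gt C S dl k r s x p" if "p \<in> ?P" "p < p0" for p
  proof -
    have "?G \<le> gt C S dl k r s x p" using gg_le[OF assms(2) that(1)] .
    moreover have "gt C S dl k r s x p \<noteq> ?G" using not_less_Least[OF that(2)[unfolded p0_def]] that(1) by blast
    ultimately show ?thesis by simp
  qed
  have "gt C S dl k r s x p0 < gt C S dl k r s u p0"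
    using p0 lt gg_le[OF assms(2) p0(1), of C S dl k r u] by simp
  then have "(\<Sum>j\<in>S. min (r j) (k j * (dl j - p0) + x j)) < (\<Sum>j\<in>S. min (r j) (k j * (dl j - p0) + u j))"
    unfolding gt_def by simp
  then obtain j where j: "j \<in> S" "min (r j) (k j * (dl j - p0) + x j) < min (r j) (k j * (dl j - p0) + u j)"
    using sum_mono[of S "\<lambda>j. min (r j) (k j * (dl j - p0) + u j)" "\<lambda>j. min (r j) (k j * (dl j - p0) + x j)"]
    by (meson not_le)
  have xu: "x j < u j" using j assms(3) by (metis add_le_cancel_left min.mono not_less order_refl)
  have cond0: "k j * (dl j - p0) + x j < r j" using j(2) by linarith
  let ?x' = "\<lambda>i. if i = j then Suc (x i) else x i"
  have up: "gg C S dl k r s d ?x' \<le> Suc ?G"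
    using gg_le[OF assms(2) p0(1), of C S dl k r ?x'] gt_inc[OF assms(1) j(1), of C dl k r s x p0] cond0 p0(2)
    by simp
  have lo: "Suc ?G \<le> gg C S dl k r s d ?x'"
  proof (rule gg_ge[OF assms(2)])
    fix p assume p: "p \<in> ?P"
    show "Suc ?G \<le> gt C S dl k r s ?x' p"
    proof (cases "p < p0")
      case True
      then show ?thesis using below[OF p True] gt_inc[OF assms(1) j(1), of C dl k r s x p] by simp
    next
      case False
      then have "dl j - p \<le> dl j - p0" by simp
      then have "k j * (dl j - p) \<le> k j * (dl j - p0)" by (rule mult_le_mono2)
      then have "k j * (dl j - p) + x j < r j" using cond0 by linarith
      then show ?thesis using gg_le[OF assms(2) p, of C S dl k r x] gt_inc[OF assms(1) j(1), of C dl k r s x p] by simp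
    qed
  qed
  show ?thesis using xu up lo j(1) by (intro bexI[of _ j]) auto
qed



lemma gg_iter:
  assumes "finite S" "s < d"
  shows "gg C S dl k r s d (\<lambda>_. 0) + n \<le> gg C S dl k r s d u \<Longrightarrow>
    \<exists>x. (\<forall>j\<in>S. x j \<le> u j) \<and> sum x S = n \<and> gg C S dl k r s d x = gg C S dl k r s d (\<lambda>_. 0) + n"
proof (induction n)
  case 0
  then show ?case by (intro exI[of _ "\<lambda>_. 0"]) auto
next
  case (Suc n)
  then obtain x where x: "\<forall>j\<in>S. x j \<le> u j" "sum x S = n" "gg C S dl k r s d x = gg C S dl k r s d (\<lambda>_. 0) + n"
    by auto
  then have "gg C S dl k r s d x < gg C S dl k r s d u" using Suc.prems by simp
  then obtain j where j: "j \<in> S" "x j < u j"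
      "gg C S dl k r s d (\<lambda>i. if i = j then Suc (x i) else x i) = Suc (gg C S dl k r s d x)"
    using gg_step[OF assms x(1)] by blast
  let ?x' = "\<lambda>i. if i = j then Suc (x i) else x i"
  have "sum ?x' S = sum (\<lambda>i. x i + (if i = j then 1 else 0)) S" by (rule sum.cong) auto
  also have "\<dots> = Suc n" using x(2) j(1) assms(1) by (simp add: sum.distrib)
  finally have "sum ?x' S = Suc n" .
  moreover have "\<forall>i\<in>S. ?x' i \<le> u i" using x(1) j(2) by auto
  ultimately show ?case using j(3) x(3) by (intro exI[of _ ?x']) auto
qed

lemma C1:
  assumes "finite S" "s < d" "\<forall>j\<in>S. x j \<le> r j"
  shows "sum x S + Phi C S dl k (\<lambda>j. r j - x j) (Suc s) d = gg C S dl k r s d x"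
proof -
  have "sum x S + Phi C S dl k (\<lambda>j. r j - x j) (Suc s) d =
        Min ((\<lambda>v. sum x S + v) ` (cutv C S dl k (\<lambda>j. r j - x j) (Suc s) ` {Suc s..d}))"
    unfolding Phi_def by (rule mono_Min_commute) (use assms in \<open>auto simp: mono_def\<close>)
  also have "(\<lambda>v. sum x S + v) ` (cutv C S dl k (\<lambda>j. r j - x j) (Suc s) ` {Suc s..d}) = gt C S dl k r s x ` {Suc s..d}"
    unfolding image_image
  proof (rule image_cong[OF refl])
    fix p
    have "sum x S + (\<Sum>j\<in>S. min (r j - x j) (k j * (dl j - p))) = (\<Sum>j\<in>S. x j + min (r j - x j) (k j * (dl j - p)))"
      by (simp add: sum.distrib)
    also have "\<dots> = (\<Sum>j\<in>S. min (r j) (k j * (dl j - p) + x j))"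
      by (rule sum.cong) (use assms(3) in auto)
    finally show "sum x S + cutv C S dl k (\<lambda>j. r j - x j) (Suc s) p = gt C S dl k r s x p"
      unfolding cutv_def gt_def by simp
  qed
  finally show ?thesis unfolding gg_def .
qed

lemma Phi_le: "p \<in> {s..d} \<Longrightarrow> Phi C S dl k r s d \<le> cutv C S dl k r s p"
  unfolding Phi_def by (rule Min_le) auto

lemma C2:
  assumes "s < d"
  shows "Phi C S dl k r s d \<le> gg C S dl k r s d (\<lambda>_. 0) + C"
proof -
  obtain p where p: "p \<in> {Suc s..d}" "gg C S dl k r s d (\<lambda>_. 0) = gt C S dl k r s (\<lambda>_. 0) p"
    using gg_in[OF assms] by blast
  have "p - s = Suc (p - Suc s)" using p(1) by (simp add: Suc_diff_Suc)
  then have "C * (p - Suc s) + C = C * (p - s)" by simp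
  then have "gt C S dl k r s (\<lambda>_. 0) p + C = cutv C S dl k r s p" unfolding gt_def cutv_def by simp
  moreover have "Phi C S dl k r s d \<le> cutv C S dl k r s p" by (rule Phi_le) (use p in auto)
  ultimately show ?thesis using p by simp
qed

lemma C3:
  assumes "s < d"
  shows "Phi C S dl k r s d \<le> gg C S dl k r s d (\<lambda>j. if dl j \<le> s then 0 else min (k j) (r j))"
proof -
  let ?u = "\<lambda>j. if dl j \<le> s then 0 else min (k j) (r j)"
  obtain p where p: "p \<in> {Suc s..d}" "gg C S dl k r s d ?u = gt C S dl k r s ?u p"
    using gg_in[OF assms] by blast
  have t: "min (r j) (k j * (dl j - (p - 1))) \<le> min (r j) (k j * (dl j - p) + ?u j)" for j
  proof (cases "dl j \<le> s")
    case True
    then show ?thesis using p by simp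
  next
    case False
    have "k j * (dl j - (p - 1)) \<le> k j * (dl j - p) + k j"
    proof -
      have "dl j - (p - 1) \<le> (dl j - p) + 1" by simp
      then have "k j * (dl j - (p - 1)) \<le> k j * ((dl j - p) + 1)" by (rule mult_le_mono2)
      then show ?thesis by simp
    qed
    then show ?thesis using False by (auto simp: min_def)
  qed
  have "cutv C S dl k r s (p - 1) \<le> gt C S dl k r s ?u p"
    unfolding cutv_def gt_def
  proof (rule add_mono)
    show "C * (p - 1 - s) \<le> C * (p - Suc s)" by simp
    show "(\<Sum>j\<in>S. min (r j) (k j * (dl j - (p - 1)))) \<le> (\<Sum>j\<in>S. min (r j) (k j * (dl j - p) + ?u j))"
      by (rule sum_mono) (rule t)
  qed
  moreover have "Phi C S dl k r s d \<le> cutv C S dl k r s (p - 1)" by (rule Phi_le) (use p in auto)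
  ultimately show ?thesis using p by simp
qed

lemma gg_mono:
  assumes "s < d" "\<forall>j\<in>S. x j \<le> u j"
  shows "gg C S dl k r s d x \<le> gg C S dl k r s d u"
proof -
  obtain p where p: "p \<in> {Suc s..d}" "gg C S dl k r s d u = gt C S dl k r s u p"
    using gg_in[OF assms(1)] by blast
  have "gt C S dl k r s x p \<le> gt C S dl k r s u p"
    unfolding gt_def by (intro add_mono order_refl sum_mono) (use assms(2) in \<open>auto simp: min_def\<close>)
  then show ?thesis using gg_le[OF assms(1) p(1), of C S dl k r x] p(2) by simp
qed

lemma choose_x:
  assumes "finite S" "s < d"
  shows "\<exists>x. (\<forall>j\<in>S. x j \<le> k j \<and> x j \<le> r j \<and> (dl j \<le> s \<longrightarrow> x j = 0)) \<and> sum x S \<le> C \<and>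
      Phi C S dl k r s d \<le> sum x S + Phi C S dl k (\<lambda>j. r j - x j) (Suc s) d"
proof -
  let ?u = "\<lambda>j. if dl j \<le> s then 0 else min (k j) (r j)"
  let ?g0 = "gg C S dl k r s d (\<lambda>_. 0)" and ?gu = "gg C S dl k r s d ?u"
  have m: "?g0 \<le> ?gu" by (rule gg_mono[OF assms(2)]) auto
  define n where "n = min C (?gu - ?g0)"
  have "?g0 + n \<le> ?gu" using m unfolding n_def by simp
  then obtain x where x: "\<forall>j\<in>S. x j \<le> ?u j" "sum x S = n" "gg C S dl k r s d x = ?g0 + n"
    using gg_iter[OF assms] by blast
  have xall: "\<forall>j\<in>S. x j \<le> k j \<and> x j \<le> r j \<and> (dl j \<le> s \<longrightarrow> x j = 0)"
  proof
    fix j assume "j \<in> S"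
    then have "x j \<le> ?u j" using x(1) by blast
    then show "x j \<le> k j \<and> x j \<le> r j \<and> (dl j \<le> s \<longrightarrow> x j = 0)" by (cases "dl j \<le> s") auto
  qed
  then have xr: "\<forall>j\<in>S. x j \<le> r j" by blast
  have "Phi C S dl k r s d \<le> gg C S dl k r s d x"
  proof -
    have "gg C S dl k r s d x = min (?g0 + C) ?gu" using x(3) m unfolding n_def by simp
    then show ?thesis using C2[OF assms(2), of C S dl k r] C3[OF assms(2), of C S dl k r] by simp
  qed
  then have "Phi C S dl k r s d \<le> sum x S + Phi C S dl k (\<lambda>j. r j - x j) (Suc s) d"
    using C1[OF assms xr] by simp
  moreover have "sum x S \<le> C" using x(2) unfolding n_def by simp
  ultimately show ?thesis using xall by blast
qed



lemma lower:
  assumes "finite S" "\<forall>j\<in>S. dl j \<le> d"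
  shows "s \<le> d \<Longrightarrow> \<exists>y. (\<forall>j\<in>S. \<forall>t. y j t \<le> k j) \<and> (\<forall>j\<in>S. (\<Sum>t\<in>{Suc s..dl j}. y j t) \<le> r j)
     \<and> (\<forall>j t. t \<le> s \<longrightarrow> y j t = 0) \<and> (\<forall>t. (\<Sum>j\<in>{j\<in>S. t \<le> dl j}. y j t) \<le> C)
     \<and> Phi C S dl k r s d \<le> (\<Sum>j\<in>S. \<Sum>t\<in>{Suc s..dl j}. y j t)"
proof (induction "d - s" arbitrary: s r)
  case 0
  then have sd: "s = d" by simp
  have "Phi C S dl k r s d \<le> cutv C S dl k r s d" by (rule Phi_le) (use sd in auto)
  also have "cutv C S dl k r s d = 0" unfolding cutv_def using sd assms(2) by simp
  finally show ?case by (intro exI[of _ "\<lambda>_ _. 0"]) simp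
next
  case (Suc n)
  then have sd: "s < d" by simp
  obtain x where x: "\<forall>j\<in>S. x j \<le> k j \<and> x j \<le> r j \<and> (dl j \<le> s \<longrightarrow> x j = 0)" "sum x S \<le> C"
      "Phi C S dl k r s d \<le> sum x S + Phi C S dl k (\<lambda>j. r j - x j) (Suc s) d"
    using choose_x[OF assms(1) sd] by blast
  have "n = d - Suc s" "Suc s \<le> d" using Suc sd by auto
  then obtain y' where y': "\<forall>j\<in>S. \<forall>t. y' j t \<le> k j" "\<forall>j\<in>S. (\<Sum>t\<in>{Suc (Suc s)..dl j}. y' j t) \<le> r j - x j"
     "\<forall>j t. t \<le> Suc s \<longrightarrow> y' j t = 0" "\<forall>t. (\<Sum>j\<in>{j\<in>S. t \<le> dl j}. y' j t) \<le> C"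
     "Phi C S dl k (\<lambda>j. r j - x j) (Suc s) d \<le> (\<Sum>j\<in>S. \<Sum>t\<in>{Suc (Suc s)..dl j}. y' j t)"
    using Suc(1)[of "Suc s" "\<lambda>j. r j - x j"] by blast
  define y where "y = (\<lambda>j t. if t = Suc s then x j else y' j t)"
  have split: "(\<Sum>t\<in>{Suc s..dl j}. y j t) = x j + (\<Sum>t\<in>{Suc (Suc s)..dl j}. y' j t)" if "j \<in> S" for j
  proof (cases "dl j \<le> s")
    case True
    then show ?thesis using x(1) that by simp
  next
    case False
    then have "{Suc s..dl j} = insert (Suc s) {Suc (Suc s)..dl j}" by auto
    then have "(\<Sum>t\<in>{Suc s..dl j}. y j t) = y j (Suc s) + (\<Sum>t\<in>{Suc (Suc s)..dl j}. y j t)" by simp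
    also have "(\<Sum>t\<in>{Suc (Suc s)..dl j}. y j t) = (\<Sum>t\<in>{Suc (Suc s)..dl j}. y' j t)"
      by (rule sum.cong) (auto simp: y_def)
    finally show ?thesis by (simp add: y_def)
  qed
  have A1: "\<forall>j\<in>S. \<forall>t. y j t \<le> k j" using x(1) y'(1) by (simp add: y_def)
  have A2: "\<forall>j\<in>S. (\<Sum>t\<in>{Suc s..dl j}. y j t) \<le> r j"
  proof
    fix j assume j: "j \<in> S"
    show "(\<Sum>t\<in>{Suc s..dl j}. y j t) \<le> r j" using split[OF j] y'(2) x(1) j by fastforce
  qed
  have A3: "\<forall>j t. t \<le> s \<longrightarrow> y j t = 0" using y'(3) by (simp add: y_def)
  have A4: "\<forall>t. (\<Sum>j\<in>{j\<in>S. t \<le> dl j}. y j t) \<le> C"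
  proof
    fix t
    show "(\<Sum>j\<in>{j\<in>S. t \<le> dl j}. y j t) \<le> C"
    proof (cases "t = Suc s")
      case True
      have "(\<Sum>j\<in>{j\<in>S. t \<le> dl j}. y j t) = (\<Sum>j\<in>{j\<in>S. t \<le> dl j}. x j)" by (simp add: y_def True)
      also have "\<dots> \<le> sum x S" by (rule sum_mono2) (use assms in auto)
      finally show ?thesis using x(2) by simp
    next
      case False
      then show ?thesis using y'(4) by (simp add: y_def)
    qed
  qed
  have "(\<Sum>j\<in>S. \<Sum>t\<in>{Suc s..dl j}. y j t) = sum x S + (\<Sum>j\<in>S. \<Sum>t\<in>{Suc (Suc s)..dl j}. y' j t)"
    using split by (simp add: sum.distrib)
  then have A5: "Phi C S dl k r s d \<le> (\<Sum>j\<in>S. \<Sum>t\<in>{Suc s..dl j}. y j t)" using x(3) y'(5) by linarith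
  show ?case using A1 A2 A3 A4 A5 by blast
qed

theorem lemma1:
  fixes T S :: "'a set" and C :: nat and D dl k :: "'a \<Rightarrow> nat" and m :: nat
  assumes "finite T" and "S \<subseteq> T"
    and "\<forall>j\<in>T. D j > 0 \<and> dl j > 0 \<and> k j > 0"
    and "1 \<le> m" and "m \<le> nL T dl"
  shows "lamC C T S D dl k m = max_processed_after C S D dl k (tau T dl (nL T dl - m))"
proof -
  have fS: "finite S" using assms finite_subset by blast
  have kT: "\<forall>j\<in>T. k j > 0" using assms(3) by blast
  let ?s = "tau T dl (nL T dl - m)" and ?d = "tau T dl (nL T dl)"
  have sd: "?s \<le> ?d" by (rule tau_mono) (use assms in auto)
  have dlS: "\<forall>j\<in>S. dl j \<le> ?d" using dl_le_tauL[OF assms(1)] assms(2) by blast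
  obtain y where y: "\<forall>j\<in>S. \<forall>t. y j t \<le> k j" "\<forall>j\<in>S. (\<Sum>t\<in>{Suc ?s..dl j}. y j t) \<le> D j"
     "\<forall>j t. t \<le> ?s \<longrightarrow> y j t = 0" "\<forall>t. (\<Sum>j\<in>{j\<in>S. t \<le> dl j}. y j t) \<le> C"
     "Phi C S dl k D ?s ?d \<le> (\<Sum>j\<in>S. \<Sum>t\<in>{Suc ?s..dl j}. y j t)"
    using lower[OF fS dlS sd, of k D C] by blast
  have feas: "feasible_alloc C S D dl k y"
    unfolding feasible_alloc_def
  proof (intro conjI ballI allI)
    fix j t assume "j \<in> S" then show "y j t \<le> k j" using y(1) by blast
  next
    fix j assume j: "j \<in> S"
    have "(\<Sum>t\<in>{1..dl j}. y j t) = (\<Sum>t\<in>{Suc ?s..dl j}. y j t)"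
      by (rule sum.mono_neutral_right) (use y(3) in auto)
    then show "(\<Sum>t\<in>{1..dl j}. y j t) \<le> D j" using y(2) j by simp
  next
    fix t show "(\<Sum>j\<in>{j\<in>S. t \<le> dl j}. y j t) \<le> C" using y(4) by blast
  qed
  have "lamC C T S D dl k m \<le> int (Phi C S dl k D ?s ?d)"
  proof -
    have "Phi C S dl k D ?s ?d \<in> cutv C S dl k D ?s ` {?s..?d}"
      unfolding Phi_def by (rule Min_in) (use sd in auto)
    then obtain p where p: "p \<in> {?s..?d}" "Phi C S dl k D ?s ?d = cutv C S dl k D ?s p" by blast
    have "lamC C T S D dl k m \<le> int (C * (p - ?s) + AA S D dl k p)"
      using bridge[OF assms(1,2) kT assms(5)] p(1) by blast
    then show ?thesis using p(2) by (simp add: cutv_def AA_def)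
  qed
  also have "\<dots> \<le> processed_after S dl ?s y" unfolding processed_after_def of_nat_le_iff using y(5) by simp
  finally have ge: "lamC C T S D dl k m \<le> processed_after S dl ?s y" .
  have le: "\<And>z. feasible_alloc C S D dl k z \<Longrightarrow> processed_after S dl ?s z \<le> lamC C T S D dl k m"
    using upper[OF assms(1,2) kT _ assms(5)] by blast
  let ?X = "{processed_after S dl ?s z | z. feasible_alloc C S D dl k z}"
  have eq: "processed_after S dl ?s y = lamC C T S D dl k m" using ge le[OF feas] by simp
  have fin: "finite ?X"
  proof (rule finite_subset)
    show "?X \<subseteq> {0..lamC C T S D dl k m}"
    proof
      fix v assume "v \<in> ?X"
      then obtain z where z: "v = processed_after S dl ?s z" "feasible_alloc C S D dl k z" by blast
      have "0 \<le> processed_after S dl ?s z" unfolding processed_after_def by (rule of_nat_0_le_iff)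
      then show "v \<in> {0..lamC C T S D dl k m}" using le[OF z(2)] z(1) by simp
    qed
  qed simp
  have mem: "lamC C T S D dl k m \<in> ?X" using eq feas by (intro CollectI exI[of _ y]) simp
  have "Max ?X = lamC C T S D dl k m"
    by (rule Max_eqI[OF fin _ mem]) (use le in blast)
  then show ?thesis unfolding max_processed_after_def by simp
qed

end
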